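(* Let $P$ be a $\mathsf{pGCL}$ program in Knievel form, let $\sigma_0=(P,\eta_0)$ be its initial program state, and let $\mathbf{o}$ be an ordinal. Suppose there exist functions $g:\mathcal{R}(\sigma_0)\to\mathbf{o}$ (the rank) and $k$ (the certification), assigning to each $\sigma\in\mathcal{R}(\sigma_0)$ a pair $k(\sigma)=(h_\sigma,\epsilon_\sigma)$ with $h_\sigma:\Sigma\to\mathbb{R}$ and $\epsilon_\sigma\in\mathbb{R}$, such that: (1) for every $\sigma\in\mathcal{R}(\sigma_0)$, $g(\sigma)=0$ if and only if $\sigma$ is terminal; (2) for every non-terminal $\sigma\in\mathcal{R}(\sigma_0)$, letting $\mathcal{L}(\sigma)=\{\sigma'\in\mathcal{R}(\sigma)\mid g(\sigma')<g(\sigma)\}$, the pair $(h_\sigma,\epsilon_\sigma)$ is an RSM-map and, for every program state $\tau\in\Sigma$, $h_\sigma(\tau)=0$ if and only if $\tau\in\mathcal{L}(\sigma)\cup(\Sigma\setminus\mathcal{R}(\sigma))$. Then $P\in\mathsf{PAST}$.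
   Context: pGCL. Fix a countable set $\mathrm{Var}$ of variables taking rational values. Programs are generated by $P ::= \bot \mid v:=e \mid P;P \mid P\oplus_p P \mid P\,[\!]\,P \mid \mathtt{while}(b)\{P\}$ ($v\in\mathrm{Var}$, $e,p$ arithmetical expressions, $b$ boolean expression, $\bot$ the empty program; $\oplus_p$ probabilistic choice, $[\!]$ nondeterministic choice). A valuation is $\eta:\mathrm{Var}\to\mathbb{Q}$. A scheduler is a total function $f:\{L_n,R_n,L_p,R_p\}^*\to\{L_n,R_n\}$; $\mathbb{F}$ is the set of schedulers. An execution state is $(P,\eta,a,w)$ with $a\in\mathbb{Q}\cap(0,1]$, $w\in\{L_n,R_n,L_p,R_p\}^*$; a program state is $(P,\eta)$, and $\Sigma$ is the set of all program states; states with program $\bot$ are terminal. For $f\in\mathbb{F}$, $\to_f$ is the smallest relation with: $(v:=e,\eta,a,w)\to_f(\bot,\eta[v\mapsto[\![e]\!]_\eta],a,w)$; if $(P_1,\eta,a,w)\to_f(P_1',\eta',a',w')$ then $(P_1;P_2,\eta,a,w)\to_f(P_1';P_2,\eta',a',w')$; $(\bot;P_2,\eta,a,w)\to_f(P_2,\eta,a,w)$; $(P_1\oplus_pP_2,\eta,a,w)\to_f(P_2,\eta,a,wR_p)$ if $[\![p]\!]_\eta\le0$, $\to_f(P_1,\eta,a,wL_p)$ if $[\![p]\!]_\eta\ge1$, and if $0<[\![p]\!]_\eta<1$ both $\to_f(P_1,\eta,a[\![p]\!]_\eta,wL_p)$ and $\to_f(P_2,\eta,a(1-[\![p]\!]_\eta),wR_p)$;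 $(P_1[\!]P_2,\eta,a,w)\to_f(P_1,\eta,a,wL_n)$ if $f(w)=L_n$, $\to_f(P_2,\eta,a,wR_n)$ if $f(w)=R_n$; $(\mathtt{while}(b)\{P\},\eta,a,w)\to_f(P;\mathtt{while}(b)\{P\},\eta,a,w)$ if $b$ holds under $\eta$, else $\to_f(\bot,\eta,a,w)$. $\to_f^n$ ($n\ge1$) is the $n$-fold composition, $\to_f^*=\bigcup_{n\ge1}\to_f^n$. For $\sigma=(P,\eta)$ let $\sigma_e=(P,\eta,1,\varepsilon)$. The initial program state of $P$ is $(P,\eta_0)$ with $\eta_0\equiv 0$. $\mathrm{Prob}((P,\eta,a,w))=a$. $T_{\le k}(\sigma,f)$ is the set of terminal execution states $\tau$ with $\sigma_e\to_f^n\tau$ for some $n\le k$; $\mathrm{ExpRuntime}(\sigma,f)=\sum_{k\in\mathbb{N}}(1-\sum_{\tau\in T_{\le k}(\sigma,f)}\mathrm{Prob}(\tau))$. $\mathsf{PAST}$ is the set of programs $P$ with $\mathrm{ExpRuntime}((P,\eta_0),f)<\infty$ for all $f\in\mathbb{F}$. Knievel form: every occurrence of probabilistic choice in the program is of the form $\mathtt{skip}\oplus_p\mathtt{exit}$, where $\mathtt{skip}$ is a fixed finite-step program doing nothing and $\mathtt{exit}$ a fixed finite-step program terminating the whole execution. Reachable states: $\mathcal{R}(\sigma)=\{(P',\eta')\in\Sigma\mid \exists f\in\mathbb{F},\ \exists a',w':\ \sigma_e\to_f^*(P',\eta',a',w')\}$. RSM-map: a pair $(h,\epsilon)$ with $h:\Sigma\to[0,\infty)$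 and real $\epsilon>0$ such that $h$ maps terminal states to $0$ and for every $\sigma=(P,\eta)$ with $h(\sigma)>0$: (i) if $\sigma$ is deterministic, i.e. there is $\sigma'=(P',\eta')$ with $(P,\eta,1,\varepsilon)\to_f(P',\eta',1,\varepsilon)$ for all $f$, then $h(\sigma')+\epsilon\le h(\sigma)$; (ii) if $\sigma$ is nondeterministic with successors $\sigma_l=(P_l,\eta_l)$, $\sigma_r=(P_r,\eta_r)$, i.e. for every $f$, $(P,\eta,1,\varepsilon)\to_f(P_l,\eta_l,1,L_n)$ or $(P,\eta,1,\varepsilon)\to_f(P_r,\eta_r,1,R_n)$, then $\max(h(\sigma_l),h(\sigma_r))+\epsilon\le h(\sigma)$; (iii) if $\sigma$ is probabilistic with probability value $p$ and successors $\sigma_l,\sigma_r$, i.e. for all $f$, $(P,\eta,1,\varepsilon)\to_f(P_l,\eta_l,p,L_p)$ and $(P,\eta,1,\varepsilon)\to_f(P_r,\eta_r,1-p,R_p)$, then $p\,h(\sigma_l)+(1-p)h(\sigma_r)+\epsilon\le h(\sigma)$. *)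

theory Defs
  imports Complex_Main "HOL-Library.Extended_Nonnegative_Real"
begin

datatype label = Ln | Rn | Lp | Rp

type_synonym vname = nat
type_synonym valuation = "vname \<Rightarrow> rat"

text \<open>Arithmetical / boolean expressions are represented semantically, by their
  evaluation functions on valuations.\<close>

datatype prog =
    Bot
  | Assign vname "valuation \<Rightarrow> rat"
  | Seq prog prog
  | PChoice prog "valuation \<Rightarrow> rat" prog
  | NChoice prog prog
  | While "valuation \<Rightarrow> bool" prog
  | Exit

definition skip :: prog where
  "skip = Assign 0 (\<lambda>\<eta>. \<eta> 0)"

type_synonym pstate = "prog \<times> valuation"
type_synonym estate = "prog \<times> valuation \<times> rat \<times> label list"

definition schedulers :: "(label list \<Rightarrow> label) set" where
  "schedulers = {f. \<forall>w. f w \<in> {Ln, Rn}}"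

inductive step :: "(label list \<Rightarrow> label) \<Rightarrow> estate \<Rightarrow> estate \<Rightarrow> bool" for f where
  assign: "step f (Assign v e, \<eta>, a, w) (Bot, \<eta>(v := e \<eta>), a, w)"
| seq: "step f (P1, \<eta>, a, w) (P1', \<eta>', a', w') \<Longrightarrow> P1 \<noteq> Exit \<Longrightarrow>
        step f (Seq P1 P2, \<eta>, a, w) (Seq P1' P2, \<eta>', a', w')"
| seq_bot: "step f (Seq Bot P2, \<eta>, a, w) (P2, \<eta>, a, w)"
| seq_exit: "step f (Seq Exit P2, \<eta>, a, w) (Exit, \<eta>, a, w)"
| exit: "step f (Exit, \<eta>, a, w) (Bot, \<eta>, a, w)"
| prob_le0: "p \<eta> \<le> 0 \<Longrightarrow> step f (PChoice P1 p P2, \<eta>, a, w) (P2, \<eta>, a, w @ [Rp])"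
| prob_ge1: "p \<eta> \<ge> 1 \<Longrightarrow> step f (PChoice P1 p P2, \<eta>, a, w) (P1, \<eta>, a, w @ [Lp])"
| prob_l: "0 < p \<eta> \<Longrightarrow> p \<eta> < 1 \<Longrightarrow>
           step f (PChoice P1 p P2, \<eta>, a, w) (P1, \<eta>, a * p \<eta>, w @ [Lp])"
| prob_r: "0 < p \<eta> \<Longrightarrow> p \<eta> < 1 \<Longrightarrow>
           step f (PChoice P1 p P2, \<eta>, a, w) (P2, \<eta>, a * (1 - p \<eta>), w @ [Rp])"
| nd_l: "f w = Ln \<Longrightarrow> step f (NChoice P1 P2, \<eta>, a, w) (P1, \<eta>, a, w @ [Ln])"
| nd_r: "f w = Rn \<Longrightarrow> step f (NChoice P1 P2, \<eta>, a, w) (P2, \<eta>, a, w @ [Rn])"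
| while_t: "b \<eta> \<Longrightarrow> step f (While b P, \<eta>, a, w) (Seq P (While b P), \<eta>, a, w)"
| while_f: "\<not> b \<eta> \<Longrightarrow> step f (While b P, \<eta>, a, w) (Bot, \<eta>, a, w)"

definition init_exec :: "pstate \<Rightarrow> estate" where
  "init_exec \<sigma> = (fst \<sigma>, snd \<sigma>, 1, [])"

definition init_state :: "prog \<Rightarrow> pstate" where
  "init_state P = (P, \<lambda>_. 0)"

definition terminal :: "pstate \<Rightarrow> bool" where
  "terminal \<sigma> \<longleftrightarrow> fst \<sigma> = Bot"

definition eprob :: "estate \<Rightarrow> rat" where
  "eprob \<tau> = fst (snd (snd \<tau>))"

definition T_le :: "pstate \<Rightarrow> (label list \<Rightarrow> label) \<Rightarrow> nat \<Rightarrow> estate set" where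
  "T_le \<sigma> f k = {\<tau>. fst \<tau> = Bot \<and> (\<exists>n\<le>k. (step f ^^ n) (init_exec \<sigma>) \<tau>)}"

definition ExpRuntime :: "pstate \<Rightarrow> (label list \<Rightarrow> label) \<Rightarrow> ennreal" where
  "ExpRuntime \<sigma> f =
     (\<Sum>k. ennreal (1 - (\<Sum>\<tau>\<in>T_le \<sigma> f k. real_of_rat (eprob \<tau>))))"

definition PAST :: "prog set" where
  "PAST = {P. \<forall>f\<in>schedulers. ExpRuntime (init_state P) f < \<infinity>}"

fun knievel :: "prog \<Rightarrow> bool" where
  "knievel Bot = True"
| "knievel (Assign v e) = True"
| "knievel (Seq P1 P2) = (knievel P1 \<and> knievel P2)"
| "knievel (PChoice P1 p P2) = (P1 = skip \<and> P2 = Exit)"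
| "knievel (NChoice P1 P2) = (knievel P1 \<and> knievel P2)"
| "knievel (While b P) = knievel P"
| "knievel Exit = True"

definition Reach :: "pstate \<Rightarrow> pstate set" where
  "Reach \<sigma> = {(P', \<eta>'). \<exists>f\<in>schedulers. \<exists>a' w'.
                 (step f)\<^sup>*\<^sup>* (init_exec \<sigma>) (P', \<eta>', a', w')}"

definition rsm_map :: "(pstate \<Rightarrow> real) \<Rightarrow> real \<Rightarrow> bool" where
  "rsm_map h \<epsilon> \<longleftrightarrow>
     \<epsilon> > 0 \<and> (\<forall>\<sigma>. 0 \<le> h \<sigma>) \<and> (\<forall>\<sigma>. terminal \<sigma> \<longrightarrow> h \<sigma> = 0) \<and>
     (\<forall>P \<eta>. h (P, \<eta>) > 0 \<longrightarrow>
        \<comment> \<open>(i) deterministic states\<close>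
        (\<forall>P' \<eta>'. (\<forall>f\<in>schedulers. step f (P, \<eta>, 1, []) (P', \<eta>', 1, [])) \<longrightarrow>
            h (P', \<eta>') + \<epsilon> \<le> h (P, \<eta>)) \<and>
        \<comment> \<open>(ii) nondeterministic states\<close>
        (\<forall>Pl \<eta>l Pr \<eta>r. (\<forall>f\<in>schedulers. step f (P, \<eta>, 1, []) (Pl, \<eta>l, 1, [Ln]) \<or>
                                       step f (P, \<eta>, 1, []) (Pr, \<eta>r, 1, [Rn])) \<longrightarrow>
            max (h (Pl, \<eta>l)) (h (Pr, \<eta>r)) + \<epsilon> \<le> h (P, \<eta>)) \<and>
        \<comment> \<open>(iii) probabilistic states, probability value p (clipped to [0,1])\<close>
        (\<forall>(p::rat) Pl \<eta>l Pr \<eta>r. 0 \<le> p \<and> p \<le> 1 \<and>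
            (\<forall>f\<in>schedulers. (0 < p \<longrightarrow> step f (P, \<eta>, 1, []) (Pl, \<eta>l, p, [Lp])) \<and>
                             (p < 1 \<longrightarrow> step f (P, \<eta>, 1, []) (Pr, \<eta>r, 1 - p, [Rp]))) \<longrightarrow>
            real_of_rat p * h (Pl, \<eta>l) + (1 - real_of_rat p) * h (Pr, \<eta>r) + \<epsilon> \<le> h (P, \<eta>)))"

end

theory Submission
  imports Defs
begin


fun msucc :: "(label list \<Rightarrow> label) \<Rightarrow> prog \<Rightarrow> valuation \<Rightarrow> rat \<Rightarrow> label list \<Rightarrow> estate" where
  "msucc f Bot \<eta> a w = (Bot, \<eta>, a, w)"
| "msucc f (Assign v e) \<eta> a w = (Bot, \<eta>(v := e \<eta>), a, w)"
| "msucc f (Seq P1 P2) \<eta> a w = (if P1 = Bot then (P2, \<eta>, a, w) else if P1 = Exit then (Exit, \<eta>, a, w)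
     else (case msucc f P1 \<eta> a w of (P1', \<eta>', a', w') \<Rightarrow> (Seq P1' P2, \<eta>', a', w')))"
| "msucc f (PChoice P1 p P2) \<eta> a w = (if p \<eta> \<le> 0 then (P2, \<eta>, a, w @ [Rp])
     else if 1 \<le> p \<eta> then (P1, \<eta>, a, w @ [Lp]) else (P1, \<eta>, a * p \<eta>, w @ [Lp]))"
| "msucc f (NChoice P1 P2) \<eta> a w = (if f w = Ln then (P1, \<eta>, a, w @ [Ln]) else (P2, \<eta>, a, w @ [Rn]))"
| "msucc f (While b P) \<eta> a w = (if b \<eta> then (Seq P (While b P), \<eta>, a, w) else (Bot, \<eta>, a, w))"
| "msucc f Exit \<eta> a w = (Bot, \<eta>, a, w)"

fun esucc :: "(label list \<Rightarrow> label) \<Rightarrow> prog \<Rightarrow> valuation \<Rightarrow> rat \<Rightarrow> label list \<Rightarrow> estate option" where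
  "esucc f (Seq P1 P2) \<eta> a w = (if P1 = Bot \<or> P1 = Exit then None
     else map_option (\<lambda>(P1', \<eta>', a', w'). (Seq P1' P2, \<eta>', a', w')) (esucc f P1 \<eta> a w))"
| "esucc f (PChoice P1 p P2) \<eta> a w = (if 0 < p \<eta> \<and> p \<eta> < 1 then Some (P2, \<eta>, a * (1 - p \<eta>), w @ [Rp]) else None)"
| "esucc f _ \<eta> a w = None"

fun ld :: "prog \<Rightarrow> nat" where
  "ld (Seq A B) = max (Suc (ld A)) (ld B)"
| "ld (PChoice A p B) = max (ld A) (ld B)"
| "ld (NChoice A B) = max (ld A) (ld B)"
| "ld (While b A) = Suc (ld A)"
| "ld _ = 0"

inductive exitish :: "prog \<Rightarrow> nat \<Rightarrow> bool" where
  "exitish Exit 0"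
| "exitish A d \<Longrightarrow> exitish (Seq A B) (Suc d)"

lemma msucc_step:
  assumes "f \<in> schedulers" shows "Q \<noteq> Bot \<Longrightarrow> step f (Q, \<eta>, a, w) (msucc f Q \<eta> a w)"
proof (induction Q arbitrary: \<eta> a w)
  case (Seq P1 P2)
  show ?case
  proof (cases "P1 = Bot \<or> P1 = Exit")
    case True then show ?thesis by (auto intro: step.intros)
  next
    case False
    obtain P1' \<eta>' a' w' where e: "msucc f P1 \<eta> a w = (P1', \<eta>', a', w')" by (cases "msucc f P1 \<eta> a w") auto
    from Seq.IH(1)[of \<eta> a w] False e have "step f (P1, \<eta>, a, w) (P1', \<eta>', a', w')" by simp
    then show ?thesis using False e by (auto intro: step.seq)
  qed
next
  case (NChoice P1 P2)
  have "f w = Ln \<or> f w = Rn" using assms by (auto simp: schedulers_def)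
  then show ?case by (auto intro: step.intros)
qed (auto intro: step.intros)

lemma esucc_step: "esucc f Q \<eta> a w = Some y \<Longrightarrow> step f (Q, \<eta>, a, w) y"
proof (induction Q arbitrary: \<eta> a w y)
  case (Seq P1 P2)
  then obtain P1' \<eta>' a' w' where e: "esucc f P1 \<eta> a w = Some (P1', \<eta>', a', w')" and ne: "P1 \<noteq> Exit"
    and y: "y = (Seq P1' P2, \<eta>', a', w')" by (auto split: if_splits)
  then show ?case using Seq.IH(1)[OF e] by (auto intro: step.seq)
qed (auto intro: step.intros split: if_splits)


lemma msucc_shift:
  "msucc f Q \<eta> a w = (case msucc (\<lambda>z. f (w @ z)) Q \<eta> 1 [] of (Q', \<eta>', r, v) \<Rightarrow> (Q', \<eta>', a * r, w @ v))"
  by (induction Q arbitrary: \<eta> a w) (auto split: prod.split)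


lemma esucc_mass:
  "esucc f Q \<eta> a w = Some (Q', \<eta>', a', w') \<Longrightarrow> msucc f Q \<eta> a w = (Q'', \<eta>'', a'', w'') \<Longrightarrow>
   a' + a'' = a \<and> \<eta>' = \<eta> \<and> w' = w @ [Rp] \<and> w'' = w @ [Lp] \<and> (0 < a \<longrightarrow> 0 < a' \<and> 0 < a'')"
proof (induction Q arbitrary: Q' Q'' \<eta>' \<eta>'' a' a'' w' w'')
  case (Seq P1 P2)
  from Seq.prems(1) obtain P1' where ne: "P1 \<noteq> Bot" "P1 \<noteq> Exit" and e: "esucc f P1 \<eta> a w = Some (P1', \<eta>', a', w')"
    by (auto split: if_splits)
  obtain P1'' x y z where m: "msucc f P1 \<eta> a w = (P1'', x, y, z)" by (cases "msucc f P1 \<eta> a w") auto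
  with Seq.prems(2) ne have "x = \<eta>''" "y = a''" "z = w''" by auto
  with Seq.IH(1)[OF e] m show ?case by simp
next
  case (PChoice P1 p P2)
  then have "0 < p \<eta>" "p \<eta> < 1" "a' = a * (1 - p \<eta>)" "a'' = a * p \<eta>" "\<eta>' = \<eta>" "\<eta>'' = \<eta>" "w' = w @ [Rp]" "w'' = w @ [Lp]"
    by (auto split: if_splits)
  moreover have "0 < a \<Longrightarrow> 0 < a * (1 - p \<eta>)" "0 < a \<Longrightarrow> 0 < a * p \<eta>"
    using \<open>0 < p \<eta>\<close> \<open>p \<eta> < 1\<close> by simp_all
  ultimately show ?case by (simp add: ring_distribs)
qed auto

lemma knievel_skip[simp]: "knievel skip" by (simp add: skip_def)

lemma msucc_props:
  "msucc f Q \<eta> a w = (Q'', \<eta>'', a'', w'') \<Longrightarrow>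
    (esucc f Q \<eta> a w = None \<longrightarrow> a'' = a) \<and> (0 < a \<longrightarrow> 0 < a'') \<and> ld Q'' \<le> ld Q \<and>
    (knievel Q \<longrightarrow> knievel Q'')"
proof (induction Q arbitrary: Q'' \<eta>'' a'' w'')
  case (Seq P1 P2)
  show ?case
  proof (cases "P1 = Bot \<or> P1 = Exit")
    case True then show ?thesis using Seq.prems by auto
  next
    case False
    obtain P1' x y z where m: "msucc f P1 \<eta> a w = (P1', x, y, z)" by (cases "msucc f P1 \<eta> a w") auto
    with Seq.prems False have "Q'' = Seq P1' P2" "x = \<eta>''" "y = a''" "z = w''" by auto
    with Seq.IH(1)[OF m] m False show ?thesis by auto
  qed
next
  case (PChoice P1 p P2)
  then show ?case by (auto split: if_splits)
qed (auto split: if_splits)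

lemma esucc_exitish: "esucc f Q \<eta> a w = Some (Q', \<eta>', a', w') \<Longrightarrow> knievel Q \<Longrightarrow> \<exists>d\<le>ld Q. exitish Q' d"
proof (induction Q arbitrary: Q' \<eta>' a' w')
  case (Seq P1 P2)
  from Seq.prems(1) obtain P1' where e: "esucc f P1 \<eta> a w = Some (P1', \<eta>', a', w')" and q: "Q' = Seq P1' P2"
    by (auto split: if_splits)
  from Seq.IH(1)[OF e] Seq.prems(2) obtain d where "d \<le> ld P1" "exitish P1' d" by auto
  then show ?case using q by (intro exI[of _ "Suc d"]) (auto intro: exitish.intros)
next
  case (PChoice P1 p P2)
  then have "Q' = Exit" by (simp split: if_splits)
  then show ?case by (auto intro: exitish.intros)
qed simp_all

lemma exitish_step: "exitish Q (Suc d) \<Longrightarrow> \<exists>Q'. step f (Q, \<eta>, a, w) (Q', \<eta>, a, w) \<and> exitish Q' d"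
proof (induction Q arbitrary: d)
  case (Seq A B)
  then have ex: "exitish A d" by (auto elim: exitish.cases)
  show ?case
  proof (cases d)
    case 0
    then have "A = Exit" using ex by (auto elim: exitish.cases)
    then show ?thesis using 0 by (auto intro: step.intros exitish.intros)
  next
    case (Suc d')
    then obtain A' where "step f (A, \<eta>, a, w) (A', \<eta>, a, w)" "exitish A' d'" using Seq.IH(1) ex by blast
    moreover have "A \<noteq> Exit" using ex Suc by (auto elim: exitish.cases)
    ultimately show ?thesis using Suc by (auto intro: step.intros exitish.intros)
  qed
qed (auto elim: exitish.cases)

lemma exitish_steps: "exitish Q d \<Longrightarrow> (step f ^^ Suc d) (Q, \<eta>, a, w) (Bot, \<eta>, a, w)"
proof (induction d arbitrary: Q)
  case 0
  then have "Q = Exit" by (auto elim: exitish.cases)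
  then show ?case by (auto intro: step.intros)
next
  case (Suc d)
  then obtain Q' where "step f (Q, \<eta>, a, w) (Q', \<eta>, a, w)" "exitish Q' d" using exitish_step by blast
  then show ?case using Suc.IH by (meson relpowp_Suc_I2)
qed

definition cls :: "prog \<Rightarrow> valuation \<Rightarrow> rat \<Rightarrow> prog \<Rightarrow> valuation \<Rightarrow> rat \<Rightarrow> bool" where
  "cls Q \<eta> a Q' \<eta>' a' \<longleftrightarrow>
   (a' = a \<and> (\<forall>g\<in>schedulers. step g (Q,\<eta>,1,[]) (Q',\<eta>',1,[])))
 \<or> (a' = a \<and> (\<exists>Pl \<eta>l Pr \<eta>r. (\<forall>g\<in>schedulers. step g (Q,\<eta>,1,[]) (Pl,\<eta>l,1,[Ln]) \<or> step g (Q,\<eta>,1,[]) (Pr,\<eta>r,1,[Rn]))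
        \<and> ((Q',\<eta>') = (Pl,\<eta>l) \<or> (Q',\<eta>') = (Pr,\<eta>r))))
 \<or> (\<exists>p Pl \<eta>l Pr \<eta>r. 0 \<le> p \<and> p \<le> 1 \<and>
       (\<forall>g\<in>schedulers. (0 < p \<longrightarrow> step g (Q,\<eta>,1,[]) (Pl,\<eta>l,p,[Lp])) \<and> (p < 1 \<longrightarrow> step g (Q,\<eta>,1,[]) (Pr,\<eta>r,1-p,[Rp])))
     \<and> ((0 < p \<and> (Q',\<eta>') = (Pl,\<eta>l) \<and> a' = a*p) \<or> (p = 0 \<and> (Q',\<eta>') = (Pr,\<eta>r) \<and> a' = a)))"

lemma clsE:
  assumes "cls Q \<eta> a Q' \<eta>' a'"
  obtains (det) "a' = a" "\<forall>g\<in>schedulers. step g (Q,\<eta>,1,[]) (Q',\<eta>',1,[])"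
  | (nd) Pl \<eta>l Pr \<eta>r where "a' = a" "\<forall>g\<in>schedulers. step g (Q,\<eta>,1,[]) (Pl,\<eta>l,1,[Ln]) \<or> step g (Q,\<eta>,1,[]) (Pr,\<eta>r,1,[Rn])"
        "(Q',\<eta>') = (Pl,\<eta>l) \<or> (Q',\<eta>') = (Pr,\<eta>r)"
  | (pr) p Pl \<eta>l Pr \<eta>r where "0 \<le> p" "p \<le> 1"
       "\<forall>g\<in>schedulers. (0 < p \<longrightarrow> step g (Q,\<eta>,1,[]) (Pl,\<eta>l,p,[Lp])) \<and> (p < 1 \<longrightarrow> step g (Q,\<eta>,1,[]) (Pr,\<eta>r,1-p,[Rp]))"
       "(0 < p \<and> (Q',\<eta>') = (Pl,\<eta>l) \<and> a' = a*p) \<or> (p = 0 \<and> (Q',\<eta>') = (Pr,\<eta>r) \<and> a' = a)"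
  using assms unfolding cls_def by blast

lemma cls_seq:
  assumes "cls P1 \<eta> a P1' \<eta>' a'" "P1 \<noteq> Exit"
  shows "cls (Seq P1 P2) \<eta> a (Seq P1' P2) \<eta>' a'"
  using assms(1)
proof (cases rule: clsE)
  case det
  moreover have "\<forall>g\<in>schedulers. step g (Seq P1 P2, \<eta>, 1, []) (Seq P1' P2, \<eta>', 1, [])"
    using det(2) assms(2) by (auto intro: step.seq)
  ultimately show ?thesis unfolding cls_def by blast
next
  case (nd Pl \<eta>l Pr \<eta>r)
  have "\<forall>g\<in>schedulers. step g (Seq P1 P2, \<eta>, 1, []) (Seq Pl P2, \<eta>l, 1, [Ln]) \<or> step g (Seq P1 P2, \<eta>, 1, []) (Seq Pr P2, \<eta>r, 1, [Rn])"
    using nd(2) assms(2) by (auto intro: step.seq)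
  then show ?thesis using nd(1,3) unfolding cls_def by blast
next
  case (pr p Pl \<eta>l Pr \<eta>r)
  have "\<forall>g\<in>schedulers. (0 < p \<longrightarrow> step g (Seq P1 P2,\<eta>,1,[]) (Seq Pl P2,\<eta>l,p,[Lp])) \<and> (p < 1 \<longrightarrow> step g (Seq P1 P2,\<eta>,1,[]) (Seq Pr P2,\<eta>r,1-p,[Rp]))"
    using pr(3) assms(2) by (auto intro: step.seq)
  then show ?thesis using pr(1,2,4) unfolding cls_def by blast
qed

lemma msucc_cls:
  assumes "f \<in> schedulers"
  shows "Q \<noteq> Bot \<Longrightarrow> msucc f Q \<eta> a w = (Q', \<eta>', a', w') \<Longrightarrow> cls Q \<eta> a Q' \<eta>' a'"
proof (induction Q arbitrary: Q' \<eta>' a' w')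
  case (Seq P1 P2)
  show ?case
  proof (cases "P1 = Bot \<or> P1 = Exit")
    case True then show ?thesis using Seq.prems unfolding cls_def by (auto intro: step.intros)
  next
    case False
    obtain P1' x y z where m: "msucc f P1 \<eta> a w = (P1', x, y, z)" by (cases "msucc f P1 \<eta> a w") auto
    with Seq.prems False have "Q' = Seq P1' P2" "x = \<eta>'" "y = a'" "z = w'" by auto
    with Seq.IH(1)[OF _ m] False show ?thesis using cls_seq by auto
  qed
next
  case (PChoice P1 p P2)
  show ?case
  proof (cases "p \<eta> \<le> 0")
    case True
    have "step g (PChoice P1 p P2, \<eta>, 1, []) (P2, \<eta>, 1, [Rp])" for g
      using step.prob_le0[of p \<eta> g P1 P2 1 "[]"] True by simp
    then show ?thesis using PChoice.prems True unfolding cls_def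
      by (intro disjI2 exI[of _ 0]) auto
  next
    case f1: False
    show ?thesis
    proof (cases "1 \<le> p \<eta>")
      case True
      have "step g (PChoice P1 p P2, \<eta>, 1, []) (P1, \<eta>, 1, [Lp])" for g
        using step.prob_ge1[of p \<eta> g P1 P2 1 "[]"] True by simp
      then show ?thesis using PChoice.prems f1 True unfolding cls_def
        by (intro disjI2 exI[of _ 1]) auto
    next
      case False
      have s1: "step g (PChoice P1 p P2, \<eta>, 1, []) (P1, \<eta>, p \<eta>, [Lp])" for g
        using step.prob_l[of p \<eta> g P1 P2 1 "[]"] f1 False by simp
      have s2: "step g (PChoice P1 p P2, \<eta>, 1, []) (P2, \<eta>, 1 - p \<eta>, [Rp])" for g
        using step.prob_r[of p \<eta> g P1 P2 1 "[]"] f1 False by simp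
      show ?thesis using PChoice.prems f1 False s1 s2 unfolding cls_def
        by (intro disjI2 exI[of _ "p \<eta>"]) auto
    qed
  qed
next
  case (NChoice P1 P2)
  have "\<forall>g\<in>schedulers. step g (NChoice P1 P2, \<eta>, 1, []) (P1, \<eta>, 1, [Ln]) \<or> step g (NChoice P1 P2, \<eta>, 1, []) (P2, \<eta>, 1, [Rn])"
  proof
    fix g assume "g \<in> schedulers"
    then have "g [] = Ln \<or> g [] = Rn" by (auto simp: schedulers_def)
    then show "step g (NChoice P1 P2, \<eta>, 1, []) (P1, \<eta>, 1, [Ln]) \<or> step g (NChoice P1 P2, \<eta>, 1, []) (P2, \<eta>, 1, [Rn])"
      using step.nd_l[of g "[]"] step.nd_r[of g "[]"] by auto
  qed
  then show ?case using NChoice.prems unfolding cls_def by (auto split: if_splits)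
qed (auto simp: cls_def intro: step.intros split: if_splits)

lemma pot:
  assumes "rsm_map h \<epsilon>" "f \<in> schedulers" "Q \<noteq> Bot" "0 < h (Q,\<eta>)"
    "msucc f Q \<eta> a w = (Q',\<eta>',a',w')" "0 \<le> a"
  shows "real_of_rat a' * h (Q',\<eta>') + real_of_rat a * \<epsilon> \<le> real_of_rat a * h (Q,\<eta>)"
proof -
  have c: "cls Q \<eta> a Q' \<eta>' a'" using msucc_cls[OF assms(2,3,5)] .
  have R: "\<And>\<sigma>. 0 \<le> h \<sigma>" using assms(1) unfolding rsm_map_def by blast
  have ra: "0 \<le> real_of_rat a" using assms(6) by simp
  have key: "h (Q',\<eta>') + \<epsilon> \<le> h (Q,\<eta>) \<and> a' = a \<or> (\<exists>p. 0 < p \<and> p \<le> 1 \<and> a' = a * p \<and> real_of_rat p * h (Q',\<eta>') + \<epsilon> \<le> h (Q,\<eta>))"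
    using c
  proof (cases rule: clsE)
    case det
    then show ?thesis using assms(1,4) unfolding rsm_map_def by blast
  next
    case (nd Pl \<eta>l Pr \<eta>r)
    note a = nd
    then have "max (h (Pl,\<eta>l)) (h (Pr,\<eta>r)) + \<epsilon> \<le> h (Q,\<eta>)" using assms(1,4) unfolding rsm_map_def by blast
    then show ?thesis using a by auto
  next
    case (pr p Pl \<eta>l Pr \<eta>r)
    note a = pr
    have i: "real_of_rat p * h (Pl, \<eta>l) + (1 - real_of_rat p) * h (Pr, \<eta>r) + \<epsilon> \<le> h (Q, \<eta>)"
      using assms(1,4) a(1,2,3) unfolding rsm_map_def by blast
    have "0 \<le> (1 - real_of_rat p) * h (Pr, \<eta>r)" using R a(2) by (simp add: of_rat_less_eq)
    then show ?thesis using a(4) i R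
    proof (elim disjE conjE)
      assume "0 < p" "(Q',\<eta>') = (Pl,\<eta>l)" "a' = a*p" "0 \<le> (1 - real_of_rat p) * h (Pr, \<eta>r)"
      then show ?thesis using i a(2) by (intro disjI2 exI[of _ p]) auto
    qed auto
  qed
  then show ?thesis
  proof
    assume "h (Q',\<eta>') + \<epsilon> \<le> h (Q,\<eta>) \<and> a' = a"
    then have "real_of_rat a * (h (Q',\<eta>') + \<epsilon>) \<le> real_of_rat a * h (Q,\<eta>)" "a' = a"
      using mult_left_mono[OF _ ra] by auto
    then show ?thesis by (simp add: algebra_simps)
  next
    assume "\<exists>p. 0 < p \<and> p \<le> 1 \<and> a' = a * p \<and> real_of_rat p * h (Q',\<eta>') + \<epsilon> \<le> h (Q,\<eta>)"
    then obtain p where p: "a' = a * p" "real_of_rat p * h (Q',\<eta>') + \<epsilon> \<le> h (Q,\<eta>)" by blast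
    have "real_of_rat a * (real_of_rat p * h (Q',\<eta>') + \<epsilon>) \<le> real_of_rat a * h (Q,\<eta>)"
      using mult_left_mono[OF p(2) ra] .
    then show ?thesis using p(1) by (simp add: of_rat_mult algebra_simps)
  qed
qed

definition mstep :: "(label list \<Rightarrow> label) \<Rightarrow> estate \<Rightarrow> estate" where
  "mstep f x = (if fst x = Bot then x else (case x of (Q,\<eta>,a,w) \<Rightarrow> msucc f Q \<eta> a w))"

definition path :: "(label list \<Rightarrow> label) \<Rightarrow> estate \<Rightarrow> nat \<Rightarrow> estate" where
  "path f x0 n = (mstep f ^^ n) x0"

lemma path_Suc: "path f x0 (Suc n) = mstep f (path f x0 n)"
  by (simp add: path_def)

lemma path_0[simp]: "path f x0 0 = x0"
  by (simp add: path_def)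

lemma mstep_step: "f \<in> schedulers \<Longrightarrow> fst x \<noteq> Bot \<Longrightarrow> step f x (mstep f x)"
  by (cases x) (auto simp: mstep_def intro: msucc_step)

lemma path_bot_Suc: "fst (path f x0 n) = Bot \<Longrightarrow> path f x0 (Suc n) = path f x0 n"
  by (simp add: path_Suc mstep_def)

lemma path_rtranclp: "f \<in> schedulers \<Longrightarrow> (step f)\<^sup>*\<^sup>* x0 (path f x0 n)"
proof (induction n)
  case (Suc n)
  show ?case
  proof (cases "fst (path f x0 n) = Bot")
    case True then show ?thesis using Suc path_bot_Suc by metis
  next
    case False then show ?thesis using Suc mstep_step[OF Suc.prems False]
      by (metis path_Suc rtranclp.rtrancl_into_rtrancl)
  qed
qed simp

lemma path_bot_stays: "fst (path f x0 i) = Bot \<Longrightarrow> i \<le> n \<Longrightarrow> path f x0 n = path f x0 i"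
proof (induction n)
  case (Suc n)
  then show ?case by (cases "i = Suc n") (auto simp: path_bot_Suc le_Suc_eq)
qed simp

lemma path_relpow_live: "f \<in> schedulers \<Longrightarrow> fst (path f x0 k) \<noteq> Bot \<Longrightarrow> (step f ^^ k) x0 (path f x0 k)"
proof (induction k)
  case (Suc k)
  have "fst (path f x0 k) \<noteq> Bot" using Suc.prems path_bot_Suc by metis
  then show ?case using Suc mstep_step[of f "path f x0 k"] by (auto simp: path_Suc)
qed simp

lemma path_bot_relpow: "f \<in> schedulers \<Longrightarrow> \<exists>N\<le>k. (step f ^^ N) x0 (path f x0 k)"
proof (induction k)
  case (Suc k)
  show ?case
  proof (cases "fst (path f x0 k) = Bot")
    case True then show ?thesis using Suc path_bot_Suc[OF True] le_SucI by metis
  next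
    case False
    then show ?thesis using Suc mstep_step[of f "path f x0 k"] path_relpow_live[OF Suc.prems False]
      by (auto simp: path_Suc intro!: exI[of _ "Suc k"])
  qed
qed simp

lemma mstep_shift:
  "mstep f (Q, \<eta>, a, w) = (case mstep (\<lambda>z. f (w @ z)) (Q, \<eta>, 1, []) of (Q', \<eta>', r, v) \<Rightarrow> (Q', \<eta>', a * r, w @ v))"
  by (simp add: mstep_def msucc_shift[of f Q \<eta> a w])

lemma path_shift:
  assumes "path f x0 n = (Qn, \<eta>n, an, wn)"
  shows "path f x0 (n + j) = (case path (\<lambda>z. f (wn @ z)) (Qn, \<eta>n, 1, []) j of (Q, \<eta>, r, v) \<Rightarrow> (Q, \<eta>, an * r, wn @ v))"
proof (induction j)
  case 0 then show ?case using assms by simp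
next
  case (Suc j)
  obtain Q \<eta> r v where y: "path (\<lambda>z. f (wn @ z)) (Qn, \<eta>n, 1, []) j = (Q, \<eta>, r, v)" by (cases "path (\<lambda>z. f (wn @ z)) (Qn, \<eta>n, 1, []) j") auto
  have "path f x0 (n + Suc j) = mstep f (Q, \<eta>, an * r, wn @ v)" using Suc y by (simp add: path_Suc)
  also have "\<dots> = (case mstep (\<lambda>z. f (wn @ v @ z)) (Q, \<eta>, 1, []) of (Q', \<eta>', r', v') \<Rightarrow> (Q', \<eta>', an * r * r', wn @ v @ v'))"
    by (subst mstep_shift) simp
  also have "mstep (\<lambda>z. f (wn @ z)) (Q, \<eta>, r, v) = (case mstep (\<lambda>z. f (wn @ v @ z)) (Q, \<eta>, 1, []) of (Q', \<eta>', r', v') \<Rightarrow> (Q', \<eta>', r * r', v @ v'))"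
    by (subst mstep_shift) simp
  ultimately show ?case using y by (simp add: path_Suc split: prod.split)
qed

lemma sched_shift: "f \<in> schedulers \<Longrightarrow> (\<lambda>z. f (w @ z)) \<in> schedulers"
  by (simp add: schedulers_def)

lemma path_Reach:
  assumes "f \<in> schedulers" "path f x0 n = (Qn, \<eta>n, an, wn)" "n \<le> m"
  shows "(fst (path f x0 m), fst (snd (path f x0 m))) \<in> Reach (Qn, \<eta>n)"
proof -
  obtain j where m: "m = n + j" using assms(3) le_Suc_ex by blast
  have r: "(step (\<lambda>z. f (wn @ z)))\<^sup>*\<^sup>* (Qn, \<eta>n, 1, []) (path (\<lambda>z. f (wn @ z)) (Qn, \<eta>n, 1, []) j)"
    using path_rtranclp[OF sched_shift[OF assms(1)]] .
  obtain Q \<eta> r v where y: "path (\<lambda>z. f (wn @ z)) (Qn, \<eta>n, 1, []) j = (Q, \<eta>, r, v)" by (cases "path (\<lambda>z. f (wn @ z)) (Qn, \<eta>n, 1, []) j") auto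
  have "path f x0 m = (Q, \<eta>, an * r, wn @ v)" using path_shift[OF assms(2), of j] y m by simp
  then show ?thesis using r y sched_shift[OF assms(1)] by (auto simp: Reach_def init_exec_def)
qed

lemma path_prefix:
  assumes "path f x0 n = (Qn, \<eta>n, an, wn)" "n \<le> m"
  shows "\<exists>v. snd (snd (snd (path f x0 m))) = wn @ v"
proof -
  obtain j where m: "m = n + j" using assms(2) le_Suc_ex by blast
  show ?thesis using path_shift[OF assms(1), of j] m by (auto split: prod.split)
qed

fun succs :: "estate \<Rightarrow> estate set" where
  "succs (Bot, \<eta>, a, w) = {}"
| "succs (Assign v e, \<eta>, a, w) = {(Bot, \<eta>(v := e \<eta>), a, w)}"
| "succs (Seq P1 P2, \<eta>, a, w) = (\<lambda>(P1', \<eta>', a', w'). (Seq P1' P2, \<eta>', a', w')) ` succs (P1, \<eta>, a, w)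
      \<union> {(P2, \<eta>, a, w), (Exit, \<eta>, a, w)}"
| "succs (PChoice P1 p P2, \<eta>, a, w) = {(P2, \<eta>, a, w @ [Rp]), (P1, \<eta>, a, w @ [Lp]),
      (P1, \<eta>, a * p \<eta>, w @ [Lp]), (P2, \<eta>, a * (1 - p \<eta>), w @ [Rp])}"
| "succs (NChoice P1 P2, \<eta>, a, w) = {(P1, \<eta>, a, w @ [Ln]), (P2, \<eta>, a, w @ [Rn])}"
| "succs (While b P, \<eta>, a, w) = {(Seq P (While b P), \<eta>, a, w), (Bot, \<eta>, a, w)}"
| "succs (Exit, \<eta>, a, w) = {(Bot, \<eta>, a, w)}"

lemma step_succs: "step f x y \<Longrightarrow> y \<in> succs x"
  by (induction rule: step.induct) (auto intro: rev_image_eqI)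

lemma finite_succs: "finite (succs (Q, \<eta>, a, w))"
  by (induction Q arbitrary: \<eta> a w) auto

lemma finite_succs': "finite (succs x)"
  by (cases x) (simp add: finite_succs)

lemma finite_relpow: "finite {\<tau>. (step f ^^ n) x0 \<tau>}"
proof (induction n)
  case 0 then show ?case by simp
next
  case (Suc n)
  have "{\<tau>. (step f ^^ Suc n) x0 \<tau>} \<subseteq> (\<Union>y\<in>{\<tau>. (step f ^^ n) x0 \<tau>}. succs y)"
    by (auto elim!: relpowp_Suc_E dest: step_succs)
  then show ?case using Suc finite_succs' by (meson finite_UN_I finite_subset)
qed

lemma finite_T_le: "finite (T_le \<sigma> f k)"
proof -
  have "T_le \<sigma> f k \<subseteq> (\<Union>n\<in>{..k}. {\<tau>. (step f ^^ n) (init_exec \<sigma>) \<tau>})" by (auto simp: T_le_def)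
  then show ?thesis using finite_relpow by (meson finite_UN_I finite_atMost finite_subset)
qed

lemma step_pos: "step f x y \<Longrightarrow> 0 < eprob x \<Longrightarrow> 0 < eprob y"
  by (induction rule: step.induct) (auto simp: eprob_def)

lemma relpow_pos: "(step f ^^ n) x y \<Longrightarrow> 0 < eprob x \<Longrightarrow> 0 < eprob y"
proof (induction n arbitrary: y)
  case (Suc n) then show ?case by (auto elim!: relpowp_Suc_E intro: step_pos)
qed simp

lemma T_le_pos: "\<tau> \<in> T_le \<sigma> f k \<Longrightarrow> 0 < eprob \<tau>"
  by (auto simp: T_le_def init_exec_def eprob_def dest!: relpow_pos)

lemma Reach_self: "\<sigma> \<in> Reach \<sigma>"
proof -
  have "(\<lambda>_. Ln) \<in> schedulers" by (simp add: schedulers_def)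
  then show ?thesis by (cases \<sigma>) (auto simp: Reach_def init_exec_def)
qed



context
  fixes P :: prog and g :: "pstate \<Rightarrow> 'o::wellorder" and k :: "pstate \<Rightarrow> (pstate \<Rightarrow> real) \<times> real"
    and f :: "label list \<Rightarrow> label"
  assumes kn: "knievel P"
    and A3: "\<forall>\<sigma>\<in>Reach (init_state P). \<not> terminal \<sigma> \<longrightarrow>
           rsm_map (fst (k \<sigma>)) (snd (k \<sigma>)) \<and>
           (\<forall>\<tau>. fst (k \<sigma>) \<tau> = 0 \<longleftrightarrow>
                 \<tau> \<in> {\<sigma>' \<in> Reach \<sigma>. g \<sigma>' < g \<sigma>} \<union> (UNIV - Reach \<sigma>))"
    and fS: "f \<in> schedulers"
begin

abbreviation "x0 \<equiv> init_exec (init_state P)"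
abbreviation "xx n \<equiv> path f x0 n"
abbreviation "st n \<equiv> (fst (xx n), fst (snd (xx n)))"
definition "AA n = real_of_rat (eprob (xx n))"
definition "A' n = (if fst (xx n) = Bot then 0 else AA n)"

lemma x0_eq: "x0 = (P, \<lambda>_. 0, 1, [])" by (simp add: init_exec_def init_state_def)

lemma xx_eq: "xx n = (fst (st n), snd (st n), eprob (xx n), snd (snd (snd (xx n))))"
  by (cases "xx n") (auto simp: eprob_def)

lemma st_reach0: "st n \<in> Reach (init_state P)"
  using path_Reach[OF fS, of x0 0 P "\<lambda>_. 0" 1 "[]" n] x0_eq by (simp add: init_state_def)

lemma st_reach: "i \<le> m \<Longrightarrow> st m \<in> Reach (st i)"
  using path_Reach[OF fS xx_eq[of i]] by simp

lemma xx_props: "0 < eprob (xx n) \<and> knievel (fst (xx n)) \<and> ld (fst (xx n)) \<le> ld P"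
proof (induction n)
  case 0 then show ?case using kn by (simp add: x0_eq eprob_def)
next
  case (Suc n)
  show ?case
  proof (cases "fst (xx n) = Bot")
    case True then show ?thesis using Suc path_bot_Suc[OF True] by simp
  next
    case False
    obtain Q \<eta> a w where e: "xx n = (Q, \<eta>, a, w)" by (cases "xx n") auto
    obtain Q'' \<eta>'' a'' w'' where m: "msucc f Q \<eta> a w = (Q'', \<eta>'', a'', w'')" by (cases "msucc f Q \<eta> a w") auto
    have "xx (Suc n) = (Q'', \<eta>'', a'', w'')" using False e m by (simp add: path_Suc mstep_def)
    then show ?thesis using msucc_props[OF m] Suc e by (auto simp: eprob_def)
  qed
qed

lemma AA_pos: "0 < AA n" using xx_props by (simp add: AA_def)

lemma A'_nonneg: "0 \<le> A' n" using AA_pos[of n] by (simp add: A'_def)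

lemma A'_le: "A' n \<le> AA n" using AA_pos[of n] by (simp add: A'_def)

lemma telescope:
  assumes rsm: "rsm_map h \<epsilon>"
  shows "i \<le> j \<Longrightarrow> (\<forall>m. i \<le> m \<longrightarrow> m < j \<longrightarrow> 0 < h (st m)) \<Longrightarrow>
     AA j * h (st j) + \<epsilon> * (\<Sum>m\<in>{i..<j}. AA m) \<le> AA i * h (st i)"
proof (induction j)
  case 0 then show ?case by simp
next
  case (Suc j)
  show ?case
  proof (cases "i = Suc j")
    case True then show ?thesis by simp
  next
    case False
    then have ij: "i \<le> j" using Suc.prems by simp
    have IH: "AA j * h (st j) + \<epsilon> * (\<Sum>m\<in>{i..<j}. AA m) \<le> AA i * h (st i)"
      using Suc.IH[OF ij] Suc.prems by simp
    have hp: "0 < h (st j)" using Suc.prems ij by simp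
    have nb: "fst (xx j) \<noteq> Bot"
    proof
      assume "fst (xx j) = Bot"
      then have "terminal (st j)" by (simp add: terminal_def)
      then have "h (st j) = 0" using rsm unfolding rsm_map_def by blast
      then show False using hp by simp
    qed
    obtain Q \<eta> a w where e: "xx j = (Q, \<eta>, a, w)" by (cases "xx j") auto
    obtain Q'' \<eta>'' a'' w'' where m: "msucc f Q \<eta> a w = (Q'', \<eta>'', a'', w'')" by (cases "msucc f Q \<eta> a w") auto
    have s: "xx (Suc j) = (Q'', \<eta>'', a'', w'')" using nb e m by (simp add: path_Suc mstep_def)
    have a0: "0 \<le> a" using xx_props[of j] e by (simp add: eprob_def)
    have "real_of_rat a'' * h (Q'',\<eta>'') + real_of_rat a * \<epsilon> \<le> real_of_rat a * h (Q,\<eta>)"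
      using pot[OF rsm fS _ _ m a0] nb e hp by simp
    then have "AA (Suc j) * h (st (Suc j)) + AA j * \<epsilon> \<le> AA j * h (st j)"
      using s e by (simp add: AA_def eprob_def)
    then show ?thesis using IH ij by (simp add: algebra_simps)
  qed
qed

lemma phase: "\<exists>C. \<forall>N. (\<Sum>n\<in>{i..<N}. A' n) \<le> C"
proof -
  have "\<forall>i. g (st i) = \<alpha> \<longrightarrow> (\<exists>C. \<forall>N. (\<Sum>n\<in>{i..<N}. A' n) \<le> C)" for \<alpha>
  proof (induction \<alpha> rule: less_induct)
    case (less \<alpha>)
    show ?case
    proof (intro allI impI)
      fix i assume gi: "g (st i) = \<alpha>"
      show "\<exists>C. \<forall>N. (\<Sum>n\<in>{i..<N}. A' n) \<le> C"
      proof (cases "fst (xx i) = Bot")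
        case True
        have "A' n = 0" if "n \<in> {i..<N}" for n N
          using path_bot_stays[OF True, of n] that True by (simp add: A'_def)
        then have "(\<Sum>n\<in>{i..<N}. A' n) = 0" for N by (intro sum.neutral) blast
        then show ?thesis by (intro exI[of _ 0]) simp
      next
        case False
        define h where "h = fst (k (st i))"
        define \<epsilon> where "\<epsilon> = snd (k (st i))"
        have nt: "\<not> terminal (st i)" using False by (simp add: terminal_def)
        have rsm: "rsm_map h \<epsilon>" and zer: "\<And>\<tau>. h \<tau> = 0 \<longleftrightarrow> \<tau> \<in> {\<sigma>' \<in> Reach (st i). g \<sigma>' < g (st i)} \<union> (UNIV - Reach (st i))"
          using A3 st_reach0[of i] nt unfolding h_def \<epsilon>_def by blast+
        have hnn: "\<And>\<sigma>. 0 \<le> h \<sigma>" and ep: "0 < \<epsilon>" using rsm unfolding rsm_map_def by blast+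
        have hi: "0 < h (st i)" using zer[of "st i"] Reach_self[of "st i"] hnn[of "st i"] by auto
        have tb: "(\<Sum>m\<in>{i..<j}. A' m) \<le> AA i * h (st i) / \<epsilon>"
          if "i \<le> j" "\<forall>m. i \<le> m \<longrightarrow> m < j \<longrightarrow> 0 < h (st m)" for j
        proof -
          have "AA j * h (st j) + \<epsilon> * (\<Sum>m\<in>{i..<j}. AA m) \<le> AA i * h (st i)"
            using telescope[OF rsm that] .
          moreover have "0 \<le> AA j * h (st j)" using AA_pos[of j] hnn[of "st j"] by simp
          ultimately have "\<epsilon> * (\<Sum>m\<in>{i..<j}. AA m) \<le> AA i * h (st i)" by linarith
          then have "(\<Sum>m\<in>{i..<j}. AA m) \<le> AA i * h (st i) / \<epsilon>" using ep by (simp add: field_simps)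
          moreover have "(\<Sum>m\<in>{i..<j}. A' m) \<le> (\<Sum>m\<in>{i..<j}. AA m)" by (rule sum_mono) (rule A'_le)
          ultimately show ?thesis by linarith
        qed
        show ?thesis
        proof (cases "\<exists>j\<ge>i. h (st j) = 0")
          case True
          define j where "j = (LEAST j. i \<le> j \<and> h (st j) = 0)"
          have j: "i \<le> j" "h (st j) = 0" using LeastI_ex[OF True[unfolded Ex_def[symmetric]]] True
            unfolding j_def by (smt (verit) LeastI_ex)+
          have lt: "\<forall>m. i \<le> m \<longrightarrow> m < j \<longrightarrow> 0 < h (st m)"
          proof (intro allI impI)
            fix m assume "i \<le> m" "m < j"
            then have "h (st m) \<noteq> 0" using not_less_Least[of m "\<lambda>j. i \<le> j \<and> h (st j) = 0"] unfolding j_def by auto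
            then show "0 < h (st m)" using hnn[of "st m"] by simp
          qed
          have "g (st j) < g (st i)" using zer[of "st j"] j st_reach[OF j(1)] by auto
          then obtain C where C: "\<forall>N. (\<Sum>n\<in>{j..<N}. A' n) \<le> C" using less gi by blast
          have "(\<Sum>n\<in>{i..<N}. A' n) \<le> AA i * h (st i) / \<epsilon> + C" for N
          proof -
            have "(\<Sum>n\<in>{i..<N}. A' n) \<le> (\<Sum>n\<in>{i..<max N j}. A' n)"
              by (rule sum_mono2) (auto simp: A'_nonneg)
            also have "\<dots> = (\<Sum>n\<in>{i..<j}. A' n) + (\<Sum>n\<in>{j..<max N j}. A' n)"
              using j(1) by (simp add: sum.atLeastLessThan_concat)
            also have "\<dots> \<le> AA i * h (st i) / \<epsilon> + C" using tb[OF j(1) lt] C by (meson add_mono)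
            finally show ?thesis .
          qed
          then show ?thesis by blast
        next
          case False
          have "(\<Sum>n\<in>{i..<N}. A' n) \<le> AA i * h (st i) / \<epsilon>" for N
          proof (cases "i \<le> N")
            case True
            have "\<forall>m. i \<le> m \<longrightarrow> m < N \<longrightarrow> 0 < h (st m)" using False hnn by (metis less_eq_real_def)
            then show ?thesis using tb[OF True] by simp
          next
            case False
            then show ?thesis using AA_pos[of i] hi ep by simp
          qed
          then show ?thesis by blast
        qed
      qed
    qed
  qed
  then show ?thesis by blast
qed


abbreviation "ww n \<equiv> snd (snd (snd (xx n)))"
definition "esX x = (case x of (Q,\<eta>,a,w) \<Rightarrow> esucc f Q \<eta> a w)"
definition "branch n \<longleftrightarrow> fst (xx n) \<noteq> Bot \<and> esX (xx n) \<noteq> None"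
definition "EE n = (if branch n then real_of_rat (eprob (the (esX (xx n)))) else 0)"
definition "zt n = (case the (esX (xx n)) of (Q,\<eta>,a,w) \<Rightarrow> (Bot,\<eta>,a,w))"

lemma branch_facts:
  assumes "branch n"
  shows "\<exists>Q' \<eta>' a' d. esX (xx n) = Some (Q',\<eta>',a',ww n @ [Rp]) \<and> exitish Q' d \<and> d \<le> ld P \<and>
     ww (Suc n) = ww n @ [Lp] \<and> AA (Suc n) + EE n = AA n \<and> step f (xx n) (Q',\<eta>',a',ww n @ [Rp])
     \<and> zt n = (Bot, \<eta>', a', ww n @ [Rp]) \<and> EE n = real_of_rat a' \<and> 0 < a'"
proof -
  obtain Q \<eta> a w where e: "xx n = (Q, \<eta>, a, w)" by (cases "xx n") auto
  from assms e obtain Q' \<eta>' a' w' where es: "esucc f Q \<eta> a w = Some (Q', \<eta>', a', w')" and nb: "Q \<noteq> Bot"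
    by (auto simp: branch_def esX_def)
  obtain Q'' \<eta>'' a'' w'' where m: "msucc f Q \<eta> a w = (Q'', \<eta>'', a'', w'')" by (cases "msucc f Q \<eta> a w") auto
  have s: "xx (Suc n) = (Q'', \<eta>'', a'', w'')" using nb e m by (simp add: path_Suc mstep_def)
  have ms: "a' + a'' = a \<and> \<eta>' = \<eta> \<and> w' = w @ [Rp] \<and> w'' = w @ [Lp]" using esucc_mass[OF es m] by simp
  have "0 < a" using xx_props[of n] e by (simp add: eprob_def)
  then have "0 < a'" using esucc_mass[OF es m] by simp
  obtain d where d: "d \<le> ld Q" "exitish Q' d" using esucc_exitish[OF es] xx_props[of n] e by auto
  have "ld Q \<le> ld P" using xx_props[of n] e by simp
  moreover have "AA (Suc n) + EE n = AA n"
    using s e es ms assms by (auto simp: AA_def EE_def eprob_def esX_def simp flip: of_rat_add)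
  ultimately show ?thesis using d s e es ms esucc_step[OF es] assms \<open>0 < a'\<close>
    by (intro exI[of _ Q'] exI[of _ \<eta>'] exI[of _ a'] exI[of _ d]) (auto simp: esX_def zt_def EE_def eprob_def)
qed

lemma mass_step: "AA (Suc n) + EE n = AA n"
proof (cases "branch n")
  case True then show ?thesis using branch_facts by blast
next
  case False
  show ?thesis
  proof (cases "fst (xx n) = Bot")
    case True then show ?thesis using path_bot_Suc[OF True] by (simp add: EE_def branch_def AA_def)
  next
    case nb: False
    obtain Q \<eta> a w where e: "xx n = (Q, \<eta>, a, w)" by (cases "xx n") auto
    obtain Q'' \<eta>'' a'' w'' where m: "msucc f Q \<eta> a w = (Q'', \<eta>'', a'', w'')" by (cases "msucc f Q \<eta> a w") auto
    have s: "xx (Suc n) = (Q'', \<eta>'', a'', w'')" using nb e m by (simp add: path_Suc mstep_def)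
    have "esucc f Q \<eta> a w = None" using False nb e unfolding branch_def esX_def by (cases "esucc f Q \<eta> a w") auto
    then have "a'' = a" using msucc_props[OF m] by simp
    then show ?thesis using s e False by (simp add: AA_def EE_def eprob_def)
  qed
qed

lemma mass: "AA kk + (\<Sum>n<kk. EE n) = 1"
proof (induction kk)
  case 0 then show ?case by (simp add: AA_def x0_eq eprob_def)
next
  case (Suc kk) then show ?case using mass_step[of kk] by simp
qed

lemma EE_nonneg: "0 \<le> EE n"
proof (cases "branch n")
  case True then show ?thesis using branch_facts[OF True] by auto
qed (simp add: EE_def)

lemma EE_le: "EE n \<le> A' n"
proof (cases "branch n")
  case True
  then show ?thesis using mass_step[of n] AA_pos[of "Suc n"] by (simp add: A'_def branch_def)
next
  case False then show ?thesis by (simp add: EE_def A'_nonneg)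
qed

lemma A'_dec: "A' (Suc n) \<le> A' n"
proof (cases "fst (xx (Suc n)) = Bot")
  case True then show ?thesis by (simp add: A'_def A'_nonneg[of n, unfolded A'_def])
next
  case False
  then have "fst (xx n) \<noteq> Bot" using path_bot_Suc by metis
  then show ?thesis using False mass_step[of n] EE_nonneg[of n] by (simp add: A'_def)
qed

lemma A'_mono: "m \<le> n \<Longrightarrow> A' n \<le> A' m"
  using A'_dec decseq_Suc_iff[of A'] by (simp add: decseqD)

lemma zt_T: assumes "branch n" "n + ld P + 2 \<le> kk" shows "zt n \<in> T_le (init_state P) f kk"
proof -
  obtain Q' \<eta>' a' d where b: "exitish Q' d" "d \<le> ld P" "step f (xx n) (Q',\<eta>',a',ww n @ [Rp])"
    "zt n = (Bot, \<eta>', a', ww n @ [Rp])"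
    using branch_facts[OF assms(1)] by blast
  have r1: "(step f ^^ n) x0 (xx n)" using path_relpow_live[OF fS] assms(1) by (simp add: branch_def)
  have r2: "(step f ^^ Suc d) (Q',\<eta>',a',ww n @ [Rp]) (zt n)" using exitish_steps[OF b(1)] b(4) by simp
  have "(step f ^^ Suc (Suc d)) (xx n) (zt n)" using relpowp_Suc_I2[OF b(3) r2] .
  then have "(step f ^^ (n + Suc (Suc d))) x0 (zt n)" using r1 by (auto simp: relpowp_add)
  moreover have "n + Suc (Suc d) \<le> kk" using assms(2) b(2) by simp
  moreover have "fst (zt n) = Bot" using b(4) by simp
  ultimately show ?thesis unfolding T_le_def by blast
qed

lemma xx_T: "fst (xx kk) = Bot \<Longrightarrow> xx kk \<in> T_le (init_state P) f kk"
  using path_bot_relpow[OF fS, where k=kk] unfolding T_le_def by blast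

lemma ww_prefix: "n \<le> m \<Longrightarrow> \<exists>v. ww m = ww n @ v"
  using path_prefix[OF xx_eq[of n]] by simp

lemma zt_inj: "inj_on zt {n. branch n}"
proof (rule inj_onI)
  have *: "zt n \<noteq> zt n'" if b1: "branch n" and b2: "branch n'" and b3: "n < n'" for n n'
  proof
    assume eq: "zt n = zt n'"
    obtain \<eta>1 a1 where z1: "zt n = (Bot, \<eta>1, a1, ww n @ [Rp])" using branch_facts[OF b1] by blast
    obtain \<eta>2 a2 where z2: "zt n' = (Bot, \<eta>2, a2, ww n' @ [Rp])" using branch_facts[OF b2] by blast
    have e1: "ww n = ww n'" using eq z1 z2 by simp
    obtain v where v: "ww n' = ww (Suc n) @ v" using ww_prefix[of "Suc n" n'] b3 by auto
    have "ww (Suc n) = ww n @ [Lp]" using branch_facts[OF b1] by blast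
    then have "length (ww n') = length (ww n) + Suc (length v)" using v by simp
    then show False using e1 by simp
  qed
  fix n n' assume "n \<in> {n. branch n}" "n' \<in> {n. branch n}" "zt n = zt n'"
  then show "n = n'" using *[of n n'] *[of n' n] by (cases n n' rule: linorder_cases) auto
qed

lemma zt_ne: assumes "branch n" "n < kk" shows "zt n \<noteq> xx kk"
proof
  assume eq: "zt n = xx kk"
  obtain v where v: "ww kk = ww (Suc n) @ v" using ww_prefix[of "Suc n" kk] assms(2) by auto
  obtain \<eta>' a' where z: "zt n = (Bot, \<eta>', a', ww n @ [Rp])" using branch_facts[OF assms(1)] by blast
  have "ww kk = ww n @ [Rp]" using eq[symmetric] z by simp
  moreover have "ww (Suc n) = ww n @ [Lp]" using branch_facts[OF assms(1)] by blast
  ultimately show False using v by simp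
qed


lemma bound:
  "1 - (\<Sum>\<tau>\<in>T_le (init_state P) f kk. real_of_rat (eprob \<tau>)) \<le> real (ld P + 2) * A' (kk - (ld P + 1))"
proof -
  define D where "D = ld P"
  define T where "T = T_le (init_state P) f kk"
  define B where "B = {n. n < kk \<and> branch n \<and> n + D + 2 \<le> kk}"
  define M where "M = (if fst (xx kk) = Bot then {xx kk} else {})"
  define c where "c = A' (kk - (D + 1))"
  let ?p = "\<lambda>\<tau>. real_of_rat (eprob \<tau>)"
  have fin: "finite T" unfolding T_def by (rule finite_T_le)
  have finB: "finite B" unfolding B_def by (rule finite_subset[of _ "{..<kk}"]) auto
  have ST1: "M \<subseteq> T" unfolding M_def T_def using xx_T by simp
  have ST2: "zt ` B \<subseteq> T"
  proof
    fix y assume "y \<in> zt ` B"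
    then obtain n where "n \<in> B" "y = zt n" by blast
    then show "y \<in> T" unfolding B_def T_def D_def using zt_T by blast
  qed
  have ST: "M \<union> zt ` B \<subseteq> T" using ST1 ST2 by blast
  have nn: "\<And>\<tau>. \<tau> \<in> T - (M \<union> zt ` B) \<Longrightarrow> 0 \<le> ?p \<tau>" unfolding T_def using T_le_pos by (meson DiffD1 less_imp_le zero_less_of_rat_iff)
  have "sum ?p (M \<union> zt ` B) \<le> sum ?p T" by (rule sum_mono2[OF fin ST nn])
  moreover have "M \<inter> zt ` B = {}"
  proof -
    have "xx kk \<notin> zt ` B"
    proof
      assume "xx kk \<in> zt ` B"
      then obtain n where "n \<in> B" "xx kk = zt n" by (rule imageE)
      then show False using zt_ne[of n kk] by (simp add: B_def)
    qed
    then show ?thesis unfolding M_def by simp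
  qed
  then have "sum ?p (M \<union> zt ` B) = sum ?p M + sum ?p (zt ` B)"
    by (intro sum.union_disjoint) (auto simp: M_def finB)
  moreover have "sum ?p (zt ` B) = sum (?p \<circ> zt) B"
    by (rule sum.reindex) (rule inj_on_subset[OF zt_inj], auto simp: B_def)
  moreover have "sum (?p \<circ> zt) B = sum EE B"
  proof (rule sum.cong)
    fix n assume "n \<in> B"
    then have "branch n" by (simp add: B_def)
    then show "(?p \<circ> zt) n = EE n" using branch_facts[of n] by (auto simp: eprob_def)
  qed simp
  moreover have "sum ?p M = AA kk - A' kk" by (simp add: M_def A'_def AA_def)
  ultimately have s1: "AA kk - A' kk + sum EE B \<le> sum ?p T" by linarith
  have s2: "sum EE {..<kk} = sum EE ({..<kk} - B) + sum EE B"
    by (rule sum.subset_diff) (auto simp: B_def)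
  have pw: "EE n \<le> (if kk - (D + 1) \<le> n then c else 0)" if "n \<in> {..<kk} - B" for n
  proof (cases "branch n")
    case True
    then have "kk - (D + 1) \<le> n" using that by (auto simp: B_def)
    then show ?thesis using EE_le[of n] A'_mono[of "kk - (D + 1)" n] by (simp add: c_def)
  next
    case False then show ?thesis by (simp add: EE_def c_def A'_nonneg)
  qed
  have c0: "0 \<le> c" by (simp add: c_def A'_nonneg)
  have "sum EE ({..<kk} - B) \<le> (\<Sum>n\<in>{..<kk} - B. if kk - (D + 1) \<le> n then c else 0)"
    by (rule sum_mono) (rule pw)
  also have "\<dots> \<le> (\<Sum>n\<in>{..<kk}. if kk - (D + 1) \<le> n then c else 0)"
    by (rule sum_mono2) (auto simp: c0)
  also have "\<dots> = (\<Sum>n\<in>{n\<in>{..<kk}. kk - (D + 1) \<le> n}. c)"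
    by (rule sum.inter_filter[symmetric]) simp
  also have "{n\<in>{..<kk}. kk - (D + 1) \<le> n} = {kk - (D + 1)..<kk}" by auto
  also have "(\<Sum>n\<in>{kk - (D + 1)..<kk}. c) = real (kk - (kk - (D + 1))) * c" by simp
  also have "\<dots> \<le> real (D + 1) * c" using c0 by (intro mult_right_mono) auto
  finally have s3: "sum EE ({..<kk} - B) \<le> real (D + 1) * c" .
  have "A' kk \<le> c" unfolding c_def by (rule A'_mono) simp
  then show ?thesis using mass[of kk] s1 s2 s3 unfolding T_def D_def[symmetric] c_def[symmetric]
    by (simp add: algebra_simps)
qed

lemma summable_A': "summable A'"
proof -
  obtain C where C: "\<forall>N. (\<Sum>n\<in>{0..<N}. A' n) \<le> C" using phase[of 0] by blast
  show ?thesis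
    by (rule summableI_nonneg_bounded[of _ C]) (use C A'_nonneg in \<open>auto simp: atLeast0LessThan\<close>)
qed

lemma runtime_finite: "ExpRuntime (init_state P) f < \<infinity>"
proof -
  define m where "m = ld P + 1"
  define b where "b kk = real (ld P + 2) * A' (kk - m)" for kk
  have sb: "summable b"
  proof -
    have "summable (\<lambda>n. A' ((n + m) - m))" using summable_A' by simp
    then have "summable (\<lambda>n. A' (n - m))" by (subst summable_iff_shift[symmetric, of _ m])
    then show ?thesis unfolding b_def by (rule summable_mult)
  qed
  have b0: "0 \<le> b kk" for kk by (simp add: b_def A'_nonneg)
  have "ExpRuntime (init_state P) f \<le> (\<Sum>kk. ennreal (b kk))"
    unfolding ExpRuntime_def
    by (rule suminf_le) (use bound in \<open>auto simp: b_def m_def intro!: ennreal_leI\<close>)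
  also have "\<dots> = ennreal (suminf b)" using suminf_ennreal2[OF b0 sb] .
  finally show ?thesis by (simp add: le_less_trans)
qed

end

theorem theorem5p8:
  fixes P :: prog
    and g :: "pstate \<Rightarrow> 'o::{wellorder, order_bot}"
    and k :: "pstate \<Rightarrow> (pstate \<Rightarrow> real) \<times> real"
  assumes "knievel P"
    and "\<forall>\<sigma>\<in>Reach (init_state P). g \<sigma> = bot \<longleftrightarrow> terminal \<sigma>"
    and "\<forall>\<sigma>\<in>Reach (init_state P). \<not> terminal \<sigma> \<longrightarrow>
           rsm_map (fst (k \<sigma>)) (snd (k \<sigma>)) \<and>
           (\<forall>\<tau>. fst (k \<sigma>) \<tau> = 0 \<longleftrightarrow>
                 \<tau> \<in> {\<sigma>' \<in> Reach \<sigma>. g \<sigma>' < g \<sigma>} \<union> (UNIV - Reach \<sigma>))"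
  shows "P \<in> PAST"
  unfolding PAST_def using runtime_finite[OF assms(1) assms(3)] by blast

end
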